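(* Let $A,B\in \mathbb{R}^{m\times n}$ with $m<n$ and let $1\le p\le\infty$. If $A$ has full row rank and $\|A^\dagger B\|_p<1$, then for any given $b\in\mathbb{R}^m$ the equation $x=A^\dagger(B|x|+b)$ in $x\in\mathbb{R}^n$ has a unique solution, and that solution also satisfies the generalized absolute value equation $Ax-B|x|=b$.
   Context: $A^\dagger$ denotes the Moore–Penrose inverse of $A$. $|x|$ denotes the entrywise absolute value. $\|\cdot\|_p$ on matrices denotes the operator norm induced by the vector $p$-norm. *)

theory Defs
  imports "HOL-Analysis.Analysis"
begin

definition is_pinv :: "real^'n^'m \<Rightarrow> real^'m^'n \<Rightarrow> bool" where
  "is_pinv A X \<longleftrightarrow> A ** X ** A = A \<and> X ** A ** X = X \<and>
     transpose (A ** X) = A ** X \<and> transpose (X ** A) = X ** A"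

definition pinv :: "real^'n^'m \<Rightarrow> real^'m^'n" where
  "pinv A = (THE X. is_pinv A X)"

definition vabs :: "real^'n \<Rightarrow> real^'n" where
  "vabs x = (\<chi> i. \<bar>x $ i\<bar>)"

definition pnorm :: "ereal \<Rightarrow> real^'n \<Rightarrow> real" where
  "pnorm p x = (if p = \<infinity> then (MAX i\<in>UNIV. \<bar>x $ i\<bar>)
     else (\<Sum>i\<in>UNIV. \<bar>x $ i\<bar> powr real_of_ereal p) powr (1 / real_of_ereal p))"

definition opnorm :: "ereal \<Rightarrow> real^'n^'m \<Rightarrow> real" where
  "opnorm p M = (SUP x\<in>{x. pnorm p x = 1}. pnorm p (M *v x))"

end

theory Submission imports Defs begin

lemma pinv_unique:
  assumes "is_pinv A X" "is_pinv A Y" shows "X = Y"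
proof -
  have a: "A ** X ** A = A" "X ** A ** X = X" "transpose (A ** X) = A ** X" "transpose (X ** A) = X ** A"
    using assms(1) unfolding is_pinv_def by auto
  have b: "A ** Y ** A = A" "Y ** A ** Y = Y" "transpose (A ** Y) = A ** Y" "transpose (Y ** A) = Y ** A"
    using assms(2) unfolding is_pinv_def by auto
  have "A ** X = A ** Y ** A ** X"
    using b(1) by (metis matrix_mul_assoc)
  also have "\<dots> = transpose (A ** Y) ** transpose (A ** X)" using a b by (simp add: matrix_mul_assoc)
  also have "\<dots> = transpose (A ** X ** A ** Y)" by (simp add: matrix_transpose_mul matrix_mul_assoc)
  also have "\<dots> = transpose (A ** Y)" using a by simp
  also have "\<dots> = A ** Y" using b by simp
  finally have AX: "A ** X = A ** Y" .
  have "X ** A = X ** A ** Y ** A"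
    using b(1) by (metis matrix_mul_assoc)
  also have "\<dots> = transpose (X ** A) ** transpose (Y ** A)" using a b by (simp add: matrix_mul_assoc)
  also have "\<dots> = transpose (Y ** A ** X ** A)" by (simp add: matrix_transpose_mul matrix_mul_assoc)
  also have "\<dots> = transpose (Y ** A)" using b a by (metis matrix_mul_assoc)
  also have "\<dots> = Y ** A" using b by simp
  finally have XA: "X ** A = Y ** A" .
  have "X = X ** A ** X" using a by simp
  also have "\<dots> = Y ** A ** Y" using AX XA by (metis matrix_mul_assoc)
  also have "\<dots> = Y" using b by simp
  finally show ?thesis .
qed

lemma pinv_full_row:
  fixes A :: "real^'n^'m"
  assumes "rank A = CARD('m)"
  shows "A ** pinv A = mat 1"
proof -
  have sA: "surj ((*v) A)" using assms full_rank_surjective by blast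
  have ker: "y = 0" if "(A ** transpose A) *v y = 0" for y
  proof -
    have "inner y ((A ** transpose A) *v y) = 0" using that by simp
    hence "inner (transpose A *v y) (transpose A *v y) = 0"
      by (metis dot_lmul_matrix matrix_vector_mul_assoc transpose_matrix_vector)
    hence z: "transpose A *v y = 0" by simp
    obtain z where "y = A *v z" using sA by (metis surjD)
    hence "inner y y = inner (transpose A *v y) z"
      by (metis dot_lmul_matrix transpose_matrix_vector)
    thus ?thesis using z by simp
  qed
  then obtain C where C: "C ** (A ** transpose A) = mat 1"
    using matrix_left_invertible_ker by blast
  hence C2: "(A ** transpose A) ** C = mat 1" using matrix_left_right_inverse by blast
  have Ct: "transpose C = C"
  proof -
    have "transpose C = transpose C ** ((A ** transpose A) ** C)" using C2 by simp
    also have "\<dots> = (transpose C ** (A ** transpose A)) ** C"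
      by (simp add: matrix_mul_assoc)
    also have "transpose C ** (A ** transpose A) = transpose ((A ** transpose A) ** C)"
      by (simp add: matrix_transpose_mul matrix_mul_assoc)
    also have "\<dots> = mat 1" using C2 by simp
    also have "mat 1 ** C = C" by simp
    finally show ?thesis .
  qed
  define X where "X = transpose A ** C"
  have AX: "A ** X = mat 1" using C2 by (simp add: X_def matrix_mul_assoc)
  have "is_pinv A X" unfolding is_pinv_def
  proof (intro conjI)
    show "A ** X ** A = A" using AX by simp
    show "X ** A ** X = X" using AX by (simp add: matrix_mul_assoc[symmetric])
    show "transpose (A ** X) = A ** X" using AX by simp
    show "transpose (X ** A) = X ** A" using Ct
      by (simp add: X_def matrix_transpose_mul matrix_mul_assoc)
  qed
  hence "pinv A = X" unfolding pinv_def using pinv_unique by blast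
  thus ?thesis using AX by simp
qed
lemma pnorm_fin: "p \<noteq> \<infinity> \<Longrightarrow> 1 \<le> p \<Longrightarrow> p = ereal (real_of_ereal p) \<and> 1 \<le> real_of_ereal p"
  by (cases p) auto

lemma le_Max_abs: "\<bar>v $ i\<bar> \<le> (MAX i\<in>UNIV. \<bar>v $ i\<bar>)"
  by (rule Max_ge) auto

lemma pnorm_ge_comp:
  assumes "1 \<le> p" shows "\<bar>v $ i\<bar> \<le> pnorm p v"
proof (cases "p = \<infinity>")
  case True thus ?thesis by (simp add: pnorm_def)
next
  case False
  define P where "P = real_of_ereal p"
  have P: "1 \<le> P" using pnorm_fin[OF False assms] P_def by auto
  have "\<bar>v $ i\<bar> = (\<bar>v $ i\<bar> powr P) powr (1/P)" using P by (simp add: powr_powr)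
  also have "\<dots> \<le> (\<Sum>j\<in>UNIV. \<bar>v $ j\<bar> powr P) powr (1/P)"
    using P by (intro powr_mono2) (auto intro: member_le_sum)
  finally show ?thesis using False by (simp add: pnorm_def P_def)
qed

lemma pnorm_nonneg: "1 \<le> p \<Longrightarrow> 0 \<le> pnorm p v"
  using pnorm_ge_comp abs_ge_zero order_trans by metis

lemma pnorm_zero: "1 \<le> p \<Longrightarrow> pnorm p v = 0 \<Longrightarrow> v = 0"
  using pnorm_ge_comp by (metis abs_le_zero_iff vec_eq_iff zero_index)

lemma pnorm_mono:
  assumes "1 \<le> p" "\<And>i. \<bar>u $ i\<bar> \<le> \<bar>v $ i\<bar>" shows "pnorm p u \<le> pnorm p v"
proof (cases "p = \<infinity>")
  case True
  have "(MAX i\<in>UNIV. \<bar>u $ i\<bar>) \<le> (MAX i\<in>UNIV. \<bar>v $ i\<bar>)"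
    using assms(2) by (auto simp: Max_le_iff intro: order_trans[OF _ le_Max_abs])
  thus ?thesis using True by (simp add: pnorm_def)
next
  case False
  define P where "P = real_of_ereal p"
  have P: "1 \<le> P" using pnorm_fin[OF False assms(1)] P_def by auto
  have "(\<Sum>j\<in>UNIV. \<bar>u $ j\<bar> powr P) powr (1/P) \<le> (\<Sum>j\<in>UNIV. \<bar>v $ j\<bar> powr P) powr (1/P)"
    using P assms(2) by (intro powr_mono2 sum_mono sum_nonneg) auto
  thus ?thesis using False by (simp add: pnorm_def P_def)
qed

lemma pnorm_scale:
  assumes "1 \<le> p" shows "pnorm p (t *s v) = \<bar>t\<bar> * pnorm p v"
proof (cases "p = \<infinity>")
  case True
  have "(MAX i\<in>UNIV. \<bar>t\<bar> * \<bar>v $ i\<bar>) = \<bar>t\<bar> * (MAX i\<in>UNIV. \<bar>v $ i\<bar>)"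
  proof (rule antisym)
    show "(MAX i\<in>UNIV. \<bar>t\<bar> * \<bar>v $ i\<bar>) \<le> \<bar>t\<bar> * (MAX i\<in>UNIV. \<bar>v $ i\<bar>)"
      by (auto simp: Max_le_iff intro!: mult_left_mono)
    have "(MAX i\<in>UNIV. \<bar>v $ i\<bar>) \<in> (\<lambda>i. \<bar>v $ i\<bar>) ` UNIV" by (rule Max_in) auto
    then obtain j where "(MAX i\<in>UNIV. \<bar>v $ i\<bar>) = \<bar>v $ j\<bar>" by blast
    thus "\<bar>t\<bar> * (MAX i\<in>UNIV. \<bar>v $ i\<bar>) \<le> (MAX i\<in>UNIV. \<bar>t\<bar> * \<bar>v $ i\<bar>)"
      by (simp, intro Max_ge) auto
  qed
  thus ?thesis using True by (simp add: pnorm_def abs_mult)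
next
  case False
  define P where "P = real_of_ereal p"
  have P: "1 \<le> P" using pnorm_fin[OF False assms(1)] P_def by auto
  have "(\<Sum>j\<in>UNIV. \<bar>t * v $ j\<bar> powr P) = \<bar>t\<bar> powr P * (\<Sum>j\<in>UNIV. \<bar>v $ j\<bar> powr P)"
    by (simp add: abs_mult powr_mult sum_distrib_left)
  hence "(\<Sum>j\<in>UNIV. \<bar>t * v $ j\<bar> powr P) powr (1/P) = \<bar>t\<bar> * (\<Sum>j\<in>UNIV. \<bar>v $ j\<bar> powr P) powr (1/P)"
    using P by (simp add: powr_mult powr_powr sum_nonneg)
  thus ?thesis using False by (simp add: pnorm_def P_def)
qed

lemma pnorm_upper:
  assumes "1 \<le> p" "0 \<le> K" "\<And>i. \<bar>v $ i\<bar> \<le> K"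
  shows "pnorm p (v :: real^'n) \<le> real CARD('n) * K"
proof (cases "p = \<infinity>")
  case True
  have "(MAX i\<in>UNIV. \<bar>v $ i\<bar>) \<le> K" using assms by (simp add: Max_le_iff)
  also have "K \<le> real CARD('n) * K" using assms(2)
  proof -
    have "1 \<le> real CARD('n)" by (simp add: Suc_leI)
    thus ?thesis using assms(2) by (simp add: mult_le_cancel_right1)
  qed
  finally show ?thesis using True by (simp add: pnorm_def)
next
  case False
  define P where "P = real_of_ereal p"
  have P: "1 \<le> P" using pnorm_fin[OF False assms(1)] P_def by auto
  have c1: "1 \<le> real CARD('n)" by (simp add: Suc_leI)
  have "(\<Sum>j\<in>UNIV. \<bar>v $ j\<bar> powr P) \<le> (\<Sum>j\<in>(UNIV::'n set). K powr P)"
    using P assms by (intro sum_mono powr_mono2) auto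
  also have "\<dots> = real CARD('n) * K powr P" by simp
  finally have "(\<Sum>j\<in>UNIV. \<bar>v $ j\<bar> powr P) powr (1/P) \<le> (real CARD('n) * K powr P) powr (1/P)"
    using P by (intro powr_mono2 sum_nonneg) auto
  also have "\<dots> = real CARD('n) powr (1/P) * K"
    using P assms(2) by (simp add: powr_mult powr_powr)
  also have "\<dots> \<le> real CARD('n) powr 1 * K"
    using P assms(2) c1 by (intro mult_right_mono powr_mono) auto
  finally show ?thesis using False by (simp add: pnorm_def P_def)
qed

lemma opnorm_bdd:
  fixes M :: "real^'n^'m"
  assumes "1 \<le> p"
  shows "bdd_above ((\<lambda>x. pnorm p (M *v x)) ` {x. pnorm p x = 1})"
proof -
  define K where "K = (\<Sum>i\<in>UNIV. \<Sum>j\<in>UNIV. \<bar>M $ i $ j\<bar>)"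
  have K0: "0 \<le> K" unfolding K_def by (intro sum_nonneg) auto
  have "pnorm p (M *v x) \<le> real CARD('m) * K" if "pnorm p x = 1" for x
  proof (rule pnorm_upper[OF assms K0])
    fix i
    have xj: "\<bar>x $ j\<bar> \<le> 1" for j using pnorm_ge_comp[OF assms, of x j] that by simp
    have "\<bar>(M *v x) $ i\<bar> = \<bar>\<Sum>j\<in>UNIV. M $ i $ j * x $ j\<bar>" by (simp add: matrix_vector_mult_def)
    also have "\<dots> \<le> (\<Sum>j\<in>UNIV. \<bar>M $ i $ j * x $ j\<bar>)" by (rule sum_abs)
    also have "\<dots> \<le> (\<Sum>j\<in>UNIV. \<bar>M $ i $ j\<bar>)"
      using xj by (intro sum_mono) (auto simp: abs_mult intro: mult_left_le)
    also have "\<dots> \<le> K" unfolding K_def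
      by (rule member_le_sum[where f="\<lambda>i. \<Sum>j\<in>UNIV. \<bar>M $ i $ j\<bar>"]) (auto intro: sum_nonneg)
    finally show "\<bar>(M *v x) $ i\<bar> \<le> K" .
  qed
  thus ?thesis by (intro bdd_aboveI[where M="real CARD('m) * K"]) auto
qed

lemma opnorm_le:
  fixes M :: "real^'n^'m"
  assumes "1 \<le> p"
  shows "pnorm p (M *v v) \<le> opnorm p M * pnorm p v"
proof (cases "v = 0")
  case True
  have "pnorm p (0::real^'m) = 0"
    using pnorm_scale[OF assms, of 0 "0::real^'m"] by simp
  moreover have "pnorm p (0::real^'n) = 0"
    using pnorm_scale[OF assms, of 0 "0::real^'n"] by simp
  ultimately show ?thesis using True by simp
next
  case False
  define n where "n = pnorm p v"
  have n0: "0 < n" using pnorm_nonneg[OF assms, of v] pnorm_zero[OF assms, of v] False n_def by force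
  define u where "u = (1/n) *s v"
  have vu: "v = n *s u" using n0 by (simp add: u_def vector_smult_assoc)
  have u1: "pnorm p u = 1" using n0 by (simp add: u_def pnorm_scale[OF assms] n_def)
  have "pnorm p (M *v u) \<le> opnorm p M" unfolding opnorm_def
    using u1 by (intro cSUP_upper opnorm_bdd[OF assms]) auto
  hence "n * pnorm p (M *v u) \<le> n * opnorm p M" using n0 by simp
  moreover have "M *v v = n *s (M *v u)" by (simp add: vu vec_eq_iff matrix_vector_mult_def sum_distrib_left algebra_simps)
  ultimately show ?thesis using n0 by (simp add: pnorm_scale[OF assms] n_def mult.commute)
qed
theorem corollary3p1:
  fixes A B :: "real^'n^'m" and b :: "real^'m" and p :: ereal
  assumes "CARD('m) < CARD('n)"
    and "1 \<le> p"
    and "rank A = CARD('m)"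
    and "opnorm p (pinv A ** B) < 1"
  shows "(\<exists>!x :: real^'n. x = pinv A *v (B *v vabs x + b)) \<and>
         (\<forall>x :: real^'n. x = pinv A *v (B *v vabs x + b) \<longrightarrow> A *v x - B *v vabs x = b)"
proof -
  note p = assms(2)
  define X where "X = pinv A"
  define c where "c = max (opnorm p (X ** B)) 0"
  have c: "0 \<le> c" "c < 1" using assms(4) by (auto simp: c_def X_def)
  define F where "F x = X *v (B *v vabs x + b)" for x
  have Fd: "F x - F y = (X ** B) *v (vabs x - vabs y)" for x y
    by (simp add: F_def matrix_vector_mul_assoc[symmetric] algebra_simps)
  have contr: "pnorm p (F x - F y) \<le> c * pnorm p (x - y)" for x y
  proof -
    have "pnorm p (F x - F y) \<le> opnorm p (X ** B) * pnorm p (vabs x - vabs y)"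
      unfolding Fd by (rule opnorm_le[OF p])
    also have "\<dots> \<le> c * pnorm p (vabs x - vabs y)"
      using pnorm_nonneg[OF p] by (intro mult_right_mono) (auto simp: c_def)
    also have "\<dots> \<le> c * pnorm p (x - y)"
      using c by (intro mult_left_mono pnorm_mono[OF p]) (auto simp: vabs_def abs_triangle_ineq3)
    finally show ?thesis .
  qed
  have uniq: "x = y" if "F x = x" "F y = y" for x y
  proof -
    have "pnorm p (x - y) \<le> c * pnorm p (x - y)" using contr[of x y] that by simp
    hence "pnorm p (x - y) \<le> 0" using c pnorm_nonneg[OF p, of "x - y"]
      by (metis mult_le_cancel_right1 not_le order.strict_trans2)
    hence "pnorm p (x - y) = 0" using pnorm_nonneg[OF p, of "x - y"] by linarith
    hence "x - y = 0" using pnorm_zero[OF p] by blast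
    thus ?thesis by simp
  qed
  define s where "s k = (F ^^ k) 0" for k
  have sS: "s (Suc k) = F (s k)" for k by (simp add: s_def)
  define d0 where "d0 = pnorm p (s 1 - s 0)"
  have dk: "pnorm p (s (Suc k) - s k) \<le> c ^ k * d0" for k
  proof (induction k)
    case 0 thus ?case by (simp add: d0_def)
  next
    case (Suc k)
    have "pnorm p (s (Suc (Suc k)) - s (Suc k)) \<le> c * pnorm p (s (Suc k) - s k)"
      using contr by (simp add: sS)
    also have "\<dots> \<le> c * (c ^ k * d0)" using Suc c by (intro mult_left_mono) auto
    finally show ?case by simp
  qed
  have conv: "(\<lambda>k. s k $ i) \<longlonglongrightarrow> s 0 $ i + (\<Sum>k. s (Suc k) $ i - s k $ i)" for i
  proof -
    have sm: "summable (\<lambda>k. s (Suc k) $ i - s k $ i)"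
    proof (rule summable_comparison_test')
      show "summable (\<lambda>k. c ^ k * d0)" using c by (intro summable_mult2 summable_geometric) auto
      show "norm (s (Suc k) $ i - s k $ i) \<le> c ^ k * d0" for k
        using pnorm_ge_comp[OF p, of "s (Suc k) - s k" i] dk[of k] by simp
    qed
    have "(\<lambda>n. s 0 $ i + (\<Sum>k<n. s (Suc k) $ i - s k $ i)) \<longlonglongrightarrow> s 0 $ i + (\<Sum>k. s (Suc k) $ i - s k $ i)"
      by (intro tendsto_add tendsto_const summable_LIMSEQ sm)
    moreover have "s 0 $ i + (\<Sum>k<n. s (Suc k) $ i - s k $ i) = s n $ i" for n
      by (simp add: sum_lessThan_telescope[where f="\<lambda>k. s k $ i"])
    ultimately show ?thesis by simp
  qed
  define L where "L = (\<chi> i. s 0 $ i + (\<Sum>k. s (Suc k) $ i - s k $ i))"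
  have sL: "s \<longlonglongrightarrow> L" unfolding L_def by (rule vec_tendstoI) (use conv in simp)
  have "(\<lambda>k. F (s k)) \<longlonglongrightarrow> F L"
  proof -
    have "(\<lambda>k. vabs (s k)) \<longlonglongrightarrow> vabs L" unfolding vabs_def
      by (rule vec_tendstoI) (simp, intro tendsto_rabs tendsto_vec_nth sL)
    hence "(\<lambda>k. B *v vabs (s k) + b) \<longlonglongrightarrow> B *v vabs L + b"
      by (intro tendsto_add tendsto_const bounded_linear.tendsto[OF matrix_vector_mul_bounded_linear])
    thus ?thesis unfolding F_def
      by (intro bounded_linear.tendsto[OF matrix_vector_mul_bounded_linear])
  qed
  moreover have "(\<lambda>k. F (s k)) \<longlonglongrightarrow> L" using LIMSEQ_Suc[OF sL] by (simp add: sS)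
  ultimately have fixL: "F L = L" using LIMSEQ_unique by blast
  have AX: "A ** X = mat 1" unfolding X_def by (rule pinv_full_row[OF assms(3)])
  show ?thesis
  proof (intro conjI allI impI)
    show "\<exists>!x. x = pinv A *v (B *v vabs x + b)"
      using fixL uniq unfolding F_def X_def by metis
    fix x assume "x = pinv A *v (B *v vabs x + b)"
    hence "A *v x = (A ** X) *v (B *v vabs x + b)"
      by (metis X_def matrix_vector_mul_assoc)
    thus "A *v x - B *v vabs x = b" using AX by simp
  qed
qed

end
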